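(* Let $S(0)>0$, $\sigma>0$, $T>0$, $K>0$, and real numbers $r<\mu$. Let $S(T)=S(0)e^{\mu T-\frac12\sigma^2T+\sigma\sqrt T Z}$ with $Z\sim N(0,1)$ under $P$, and $C(T)=(S(T)-K)^+$. For $x\in[0,1)$ let $C_x=e^{-rT}\big(\mathbb{E}_P(C(T))-\tfrac12xS(0)(e^{\mu T}-e^{rT})\big)$ and $$d_1=\frac{1}{\sigma\sqrt T}\Big(\ln\frac{(xS(0)-C_x)e^{rT}}{S(0)x}-\mu T+\tfrac12\sigma^2T\Big),\quad d=\frac{1}{\sigma\sqrt T}\Big(\ln\frac{K}{S(0)}-\mu T+\tfrac12\sigma^2T\Big),$$ $$d_2=\frac{1}{\sigma\sqrt T}\Big(\ln\frac{K+(C_x-xS(0))e^{rT}}{S(0)(1-x)}-\mu T+\tfrac12\sigma^2T\Big),$$ with the convention $d_1=-\infty$ whenever $x=0$ or $xS(0)-C_x\le0$. Then $d_1<d<d_2$.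
   Context: The paper assumes $\mu>r$ throughout; $\mathbb{E}_P$ is expectation under the physical measure $P$. *)

theory Defs
  imports "HOL-Probability.Probability"
begin

definition d1_ext :: "real \<Rightarrow> real \<Rightarrow> real \<Rightarrow> real \<Rightarrow> real \<Rightarrow> real \<Rightarrow> real \<Rightarrow> ereal" where
  "d1_ext S0 sg T mu r x Cx =
     (if x = 0 \<or> x * S0 - Cx \<le> 0 then MInfty
      else ereal ((ln ((x * S0 - Cx) * exp (r * T) / (S0 * x)) - mu * T + sg^2 * T / 2)
                  / (sg * sqrt T)))"

end

theory Submission
  imports Defs
begin

lemma std_normal_exp_eq:
  fixes b :: real
  shows "std_normal_density x * exp (b * x) = exp (b^2/2) * normal_density b 1 x"
proof -
  have e: "- x\<^sup>2 / 2 + b * x = b^2/2 + (-(x - b)\<^sup>2 / 2)"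
    by (simp add: power2_eq_square field_simps)
  have "exp (- x\<^sup>2 / 2) * exp (b * x) = exp (b^2/2) * exp (-(x - b)\<^sup>2 / 2)"
    by (simp only: exp_add[symmetric] e)
  then show ?thesis unfolding std_normal_density_def normal_density_def by simp
qed

lemma key_ineq:
  fixes E S0 m A K x :: real
  assumes "E > 0" "E \<ge> S0 * m - K" "A < m" "S0 > 0" "0 \<le> x" "x < 1"
  shows "x * (S0 * (m + A) / 2 - K) < E"
proof -
  define c where "c = S0 * (m + A) / 2 - K"
  have "c < S0 * m - K" using assms unfolding c_def by (simp add: field_simps)
  have "x * c < E"
  proof (cases "c > 0")
    case True
    then have "x * c < c" using assms by (simp add: mult_less_cancel_right1)
    then show ?thesis using \<open>c < S0 * m - K\<close> assms by linarith
  next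
    case False
    then have "x * c \<le> 0" using assms by (simp add: mult_nonneg_nonpos)
    then show ?thesis using assms by linarith
  qed
  then show ?thesis by (simp add: c_def)
qed

lemma alg1:
  fixes x S0 Cx A m K E :: real
  assumes "x * (S0 * (m + A) / 2 - K) < E" "Cx * A = E - x * S0 * (m - A) / 2"
  shows "(x * S0 - Cx) * A < x * K" "K * (1 - x) < K + (Cx - x * S0) * A"
proof -
  have "(x * S0 - Cx) * A = x * S0 * A - Cx * A" by (simp add: algebra_simps)
  moreover have "(Cx - x * S0) * A = Cx * A - x * S0 * A" by (simp add: algebra_simps)
  moreover have "K * (1 - x) = K - x * K" by (simp add: algebra_simps)
  moreover have "x * (S0 * (m + A) / 2 - K) = (x * S0 * m + x * S0 * A) / 2 - x * K" by (simp add: algebra_simps)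
  moreover have "x * S0 * (m - A) / 2 = (x * S0 * m - x * S0 * A) / 2" by (simp add: algebra_simps)
  ultimately show "(x * S0 - Cx) * A < x * K" "K * (1 - x) < K + (Cx - x * S0) * A"
    using assms by argo+
qed

theorem mainTheorem3:
  fixes M :: "'a measure" and Z :: "'a \<Rightarrow> real"
    and S0 sg T K mu r x :: real
  assumes "prob_space M"
    and "distributed M lborel Z std_normal_density"
    and "S0 > 0" and "sg > 0" and "T > 0" and "K > 0" and "r < mu"
    and "0 \<le> x" and "x < 1"
  defines "ST \<equiv> (\<lambda>\<omega>. S0 * exp (mu * T - sg^2 * T / 2 + sg * sqrt T * Z \<omega>))"
  defines "Cx \<equiv> exp (- r * T) * (prob_space.expectation M (\<lambda>\<omega>. max (ST \<omega> - K) 0)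
                   - x * S0 * (exp (mu * T) - exp (r * T)) / 2)"
  defines "d \<equiv> (ln (K / S0) - mu * T + sg^2 * T / 2) / (sg * sqrt T)"
  defines "d2 \<equiv> (ln ((K + (Cx - x * S0) * exp (r * T)) / (S0 * (1 - x))) - mu * T + sg^2 * T / 2)
                 / (sg * sqrt T)"
  shows "d1_ext S0 sg T mu r x Cx < ereal d \<and> d < d2"
proof -
  interpret P: prob_space M by fact
  define a where "a = mu * T - sg^2 * T / 2"
  define b where "b = sg * sqrt T"
  define g where "g = (\<lambda>z::real. S0 * exp (a + b * z))"
  have gm: "g \<in> borel_measurable lborel" unfolding g_def by measurable
  have fg: "\<And>z. std_normal_density z * g z = S0 * exp a * exp (b^2/2) * normal_density b 1 z"
    unfolding g_def using std_normal_exp_eq[of _ b] by (simp add: exp_add algebra_simps)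
  have b2: "b^2 / 2 = sg^2 * T / 2" unfolding b_def using \<open>T > 0\<close> by (simp add: power_mult_distrib)
  have intl: "integrable lborel (\<lambda>z. std_normal_density z * g z)"
    unfolding fg by simp
  have STg: "ST = (\<lambda>\<omega>. g (Z \<omega>))" unfolding ST_def g_def a_def b_def by simp
  have intST: "integrable M ST"
    using distributed_integrable[OF assms(2) gm] intl STg by simp
  have "(\<integral>z. std_normal_density z * g z \<partial>lborel) = S0 * exp a * exp (b^2/2)"
    unfolding fg by simp
  also have "\<dots> = S0 * exp (mu * T)" unfolding b2 a_def by (simp add: exp_add[symmetric])
  finally have EST: "P.expectation ST = S0 * exp (mu * T)"
    using distributed_integral[OF assms(2) gm] STg by simp
  define E where "E = P.expectation (\<lambda>\<omega>. max (ST \<omega> - K) 0)"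
  have intmax: "integrable M (\<lambda>\<omega>. max (ST \<omega> - K) 0)"
    using intST by auto
  have E0: "E \<ge> 0" unfolding E_def by simp
  have "P.expectation (\<lambda>\<omega>. ST \<omega> - K) \<le> E"
    unfolding E_def by (rule integral_mono) (use intST intmax in auto)
  then have E1: "E \<ge> S0 * exp (mu * T) - K"
    using intST EST P.prob_space by (simp add: Bochner_Integration.integral_diff)
  have hm: "(\<lambda>z. max (g z - K) 0) \<in> borel_measurable lborel" unfolding g_def by measurable
  define h where "h = (\<lambda>z. std_normal_density z * max (g z - K) 0)"
  have hint: "integrable lborel h"
    using distributed_integrable[OF assms(2) hm] intmax STg unfolding h_def by simp
  have Eint: "E = integral\<^sup>L lborel h"
    using distributed_integral[OF assms(2) hm] STg unfolding E_def h_def by simp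
  have bpos: "b > 0" unfolding b_def using assms by simp
  have Epos: "E > 0"
  proof (rule ccontr)
    assume "\<not> E > 0"
    then have "integral\<^sup>L lborel h = 0" using E0 Eint by simp
    moreover have "AE z in lborel. 0 \<le> h z" by (simp add: h_def)
    ultimately have ae: "AE z in lborel. h z = 0"
      using integral_nonneg_eq_0_iff_AE[OF hint] by simp
    define z0 where "z0 = (ln (K / S0) - a) / b"
    have gK: "g z > K" if "z > z0" for z
    proof -
      have "b * z > ln (K / S0) - a" using that bpos unfolding z0_def by (simp add: field_simps)
      then have "exp (a + b * z) > exp (ln (K / S0))" by simp
      then have "exp (a + b * z) > K / S0" using assms by simp
      then show ?thesis unfolding g_def using assms by (simp add: field_simps)
    qed
    have "AE z in lborel. z \<le> z0"
      using ae
    proof (rule eventually_mono)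
      fix z assume hz: "h z = 0"
      show "z \<le> z0"
      proof (rule ccontr)
        assume "\<not> z \<le> z0"
        then have "g z > K" using gK by simp
        moreover have "std_normal_density z > 0" by (simp add: normal_density_pos)
        ultimately have "h z > 0" unfolding h_def by simp
        then show False using hz by simp
      qed
    qed
    then have "emeasure lborel {z0<..} = 0"
      by (subst (asm) AE_iff_measurable[of "{z0<..}"]) auto
    moreover have "emeasure lborel {z0<..z0+1} \<le> emeasure lborel {z0<..}"
      by (rule emeasure_mono) auto
    ultimately show False by simp
  qed
  have Alt: "exp (r * T) < exp (mu * T)" using assms by simp
  have key: "x * (S0 * (exp (mu * T) + exp (r * T)) / 2 - K) < E"
    by (rule key_ineq[OF Epos E1 Alt \<open>S0 > 0\<close> \<open>0 \<le> x\<close> \<open>x < 1\<close>])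
  have CxA: "Cx * exp (r * T) = E - x * S0 * (exp (mu * T) - exp (r * T)) / 2"
    unfolding Cx_def E_def by (simp add: exp_minus field_simps)
  have sp: "sg * sqrt T > 0" using assms by simp
  have part1: "d1_ext S0 sg T mu r x Cx < ereal d"
  proof (cases "x = 0 \<or> x * S0 - Cx \<le> 0")
    case True then show ?thesis unfolding d1_ext_def by simp
  next
    case False
    then have xp: "x > 0" and pos: "x * S0 - Cx > 0" using assms by auto
    have lt: "(x * S0 - Cx) * exp (r * T) / (S0 * x) < K / S0"
    proof -
      have "(x * S0 - Cx) * exp (r * T) = x * S0 * exp (r * T) - Cx * exp (r * T)"
        by (simp add: algebra_simps)
      moreover have "x * (S0 * (exp (mu * T) + exp (r * T)) / 2 - K) = x * S0 * exp (mu * T) / 2 + x * S0 * exp (r * T) / 2 - x * K"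
        by (simp add: algebra_simps)
      moreover have "x * S0 * (exp (mu * T) - exp (r * T)) / 2 = x * S0 * exp (mu * T) / 2 - x * S0 * exp (r * T) / 2"
        by (simp add: field_simps)
      have "(x * S0 - Cx) * exp (r * T) < x * K"
        using alg1(1)[OF key CxA] .
      then have "(x * S0 - Cx) * exp (r * T) / (S0 * x) < (x * K) / (S0 * x)"
        using xp \<open>S0 > 0\<close> by (intro divide_strict_right_mono) auto
      then show ?thesis using xp \<open>S0 > 0\<close> by simp
    qed
    have "ln ((x * S0 - Cx) * exp (r * T) / (S0 * x)) < ln (K / S0)"
      using lt pos xp assms by (intro ln_less_cancel_iff[THEN iffD2]) auto
    then have "(ln ((x * S0 - Cx) * exp (r * T) / (S0 * x)) - mu * T + sg^2 * T / 2) / (sg * sqrt T) < d"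
      unfolding d_def using sp by (intro divide_strict_right_mono) auto
    then show ?thesis using False unfolding d1_ext_def by simp
  qed
  have part2: "d < d2"
  proof -
    have lt: "K / S0 < (K + (Cx - x * S0) * exp (r * T)) / (S0 * (1 - x))"
    proof -
      have "(Cx - x * S0) * exp (r * T) = Cx * exp (r * T) - x * S0 * exp (r * T)"
        by (simp add: algebra_simps)
      moreover have "x * (S0 * (exp (mu * T) + exp (r * T)) / 2 - K) = x * S0 * exp (mu * T) / 2 + x * S0 * exp (r * T) / 2 - x * K"
        by (simp add: algebra_simps)
      moreover have "x * S0 * (exp (mu * T) - exp (r * T)) / 2 = x * S0 * exp (mu * T) / 2 - x * S0 * exp (r * T) / 2"
        by (simp add: field_simps)
      moreover have "K * (1 - x) = K - x * K" by (simp add: algebra_simps)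
      have "K * (1 - x) < K + (Cx - x * S0) * exp (r * T)"
        using alg1(2)[OF key CxA] .
      then have "K * (1 - x) / (S0 * (1 - x)) < (K + (Cx - x * S0) * exp (r * T)) / (S0 * (1 - x))"
        using \<open>S0 > 0\<close> \<open>x < 1\<close> by (intro divide_strict_right_mono) auto
      then show ?thesis using \<open>S0 > 0\<close> \<open>x < 1\<close> by simp
    qed
    have "ln (K / S0) < ln ((K + (Cx - x * S0) * exp (r * T)) / (S0 * (1 - x)))"
    proof -
      have kp: "0 < K / S0" using \<open>K > 0\<close> \<open>S0 > 0\<close> by simp
      have "0 < (K + (Cx - x * S0) * exp (r * T)) / (S0 * (1 - x))" using kp lt by (rule less_trans)
      then show ?thesis using kp lt ln_less_cancel_iff by blast
    qed
    then show ?thesis unfolding d_def d2_def using sp by (intro divide_strict_right_mono) auto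
  qed
  show ?thesis using part1 part2 by simp
qed

end
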